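(* Suppose $r_0(-\infty):=\lim_{x\to-\infty}r_0(x)\in\mathbb R$ exists and there are $\beta\in\mathbb R$ and $\varepsilon>0$ with $\operatorname{sgn}\big(r_0'(\beta)(r_0(\beta)+r_0(-\infty))\big)=+1$, $$\operatorname{sgn}\big(r_0'(\beta)r_0(\beta)\big)=+1,\qquad |r_0(\beta)+r_0(x)|>\varepsilon\quad\text{for every }x\le\beta .$$ Then $$t^\ast(\beta)\le\frac{1}{\sqrt{k(2r_0(\beta))}\,|r_0'(\beta)|\,\gamma_2^-(\beta)},\qquad \gamma_2^-(\beta):=\min\Big\{|f(\eta)|:\ \eta\in\big[\varepsilon,\ \sup_{x\le\beta}|r_0(\beta)+r_0(x)|\big]\Big\}.$$
   Context: Let $Q(\xi):=\sqrt{1+\xi^2}$, $L(u):=\tfrac12(u\sqrt{1+u^2}+\operatorname{arcsinh}u)$, $k(\eta):=Q(L^{-1}(-\eta/2))$, $f(\eta):=k'(\eta)/\sqrt{k(\eta)}$. Given $w_0\in\mathcal C^2(\mathbb R)$ with $w_0'$ bounded and non-constant, $r_0:=-L(w_0')$, $\ell_0:=-r_0$. System (D): $r_{,t}+k(r-\ell)r_{,x}=0$, $\ell_{,t}-k(r-\ell)\ell_{,x}=0$, $r(0,\cdot)=r_0$, $\ell(0,\cdot)=\ell_0$, maximal $\mathcal C^1$ existence interval $[0,t_* )$. Backward characteristics $x_2(t,\beta)$: $\partial_tx_2=-k((r-\ell)(t,x_2))$, $x_2(0,\beta)=\beta$, compression ratio $c_2:=\partial x_2/\partial\beta$; $t^\ast(\beta)$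 is the time at which $c_2(\cdot,\beta)$ vanishes, and $t_*\le t^\ast(\beta)$. *)

theory Defs
  imports "HOL-Analysis.Analysis"
begin

definition Qf :: "real \<Rightarrow> real" where
  "Qf \<xi> = sqrt (1 + \<xi>^2)"

definition Lf :: "real \<Rightarrow> real" where
  "Lf u = (u * sqrt (1 + u^2) + arsinh u) / 2"

text \<open>k(eta) = Q(L^{-1}(-eta/2)); L is a strictly increasing bijection of the reals.\<close>
definition kf :: "real \<Rightarrow> real" where
  "kf \<eta> = Qf (inv Lf (- \<eta> / 2))"

definition ff :: "real \<Rightarrow> real" where
  "ff \<eta> = deriv kf \<eta> / sqrt (kf \<eta>)"

text \<open>Initial Riemann invariant r0 = - L(w0').\<close>
definition r0f :: "(real \<Rightarrow> real) \<Rightarrow> real \<Rightarrow> real" where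
  "r0f w1 x = - Lf (w1 x)"

definition C1_partials :: "real \<Rightarrow> (real \<Rightarrow> real \<Rightarrow> real) \<Rightarrow> (real \<Rightarrow> real \<Rightarrow> real)
    \<Rightarrow> (real \<Rightarrow> real \<Rightarrow> real) \<Rightarrow> bool" where
  "C1_partials T u ut ux \<longleftrightarrow>
     (\<forall>t\<in>{0..<T}. \<forall>x. ((\<lambda>p. u (fst p) (snd p)) has_derivative
          (\<lambda>h. ut t x * fst h + ux t x * snd h)) (at (t, x) within ({0..<T} \<times> UNIV)))
     \<and> continuous_on ({0..<T} \<times> UNIV) (\<lambda>p. ut (fst p) (snd p))
     \<and> continuous_on ({0..<T} \<times> UNIV) (\<lambda>p. ux (fst p) (snd p))"

definition solves_D :: "real \<Rightarrow> (real \<Rightarrow> real) \<Rightarrow> (real \<Rightarrow> real \<Rightarrow> real) \<Rightarrow> (real \<Rightarrow> real \<Rightarrow> real) \<Rightarrow> bool" where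
  "solves_D T r0 r l \<longleftrightarrow>
     (\<exists>rt rx lt lx. C1_partials T r rt rx \<and> C1_partials T l lt lx \<and>
        (\<forall>t\<in>{0..<T}. \<forall>x. rt t x + kf (r t x - l t x) * rx t x = 0) \<and>
        (\<forall>t\<in>{0..<T}. \<forall>x. lt t x - kf (r t x - l t x) * lx t x = 0)) \<and>
     (\<forall>x. r 0 x = r0 x) \<and> (\<forall>x. l 0 x = - r0 x)"

definition backward_char :: "real \<Rightarrow> (real \<Rightarrow> real \<Rightarrow> real) \<Rightarrow> (real \<Rightarrow> real \<Rightarrow> real)
    \<Rightarrow> (real \<Rightarrow> real \<Rightarrow> real) \<Rightarrow> (real \<Rightarrow> real \<Rightarrow> real) \<Rightarrow> bool" where
  "backward_char T r l x2 c2 \<longleftrightarrow>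
     (\<forall>b. x2 0 b = b) \<and>
     (\<forall>b. \<forall>t\<in>{0..<T}. ((\<lambda>s. x2 s b) has_real_derivative
          (- kf (r t (x2 t b) - l t (x2 t b)))) (at t within {0..<T})) \<and>
     (\<forall>t\<in>{0..<T}. \<forall>b. ((\<lambda>b'. x2 t b') has_real_derivative c2 t b) (at b))"

end

theory Submission
  imports Defs
begin

lemma onep[simp]: "(0::real) < 1 + x^2" "(1::real) + x^2 \<noteq> 0" "(0::real) < 2 + 2*x^2" "(2::real) + 2*x^2 \<noteq> 0" "\<not> (1 + x^2 < (0::real))"
  by (auto simp: add_pos_nonneg) (smt (verit) zero_le_power2)+

lemma Lf_deriv: "(Lf has_real_derivative sqrt (1 + u^2)) (at u)"
proof -
  have s: "sqrt (1 + u^2) > 0" by (simp add: add_pos_nonneg)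
  have D: "((\<lambda>u. (u * sqrt (1 + u^2) + arsinh u) / 2) has_real_derivative
     ((1 * sqrt (1 + u^2) + u * (inverse (sqrt (1 + u^2)) / 2 * (2 * u)) + 1 / sqrt (u^2 + 1)) / 2)) (at u)"
    by (auto intro!: derivative_eq_intros arsinh_real_has_field_derivative simp: add_pos_nonneg)
  moreover have E: "(1 * sqrt (1 + u^2) + u * (inverse (sqrt (1 + u^2)) / 2 * (2 * u)) + 1 / sqrt (u^2 + 1)) / 2
      = sqrt (1 + u^2)"
  proof -
    have e: "sqrt (1+u^2) * sqrt (1+u^2) = 1 + u^2" by (simp add: add_nonneg_nonneg)
    show ?thesis using s e by (simp add: field_simps add.commute power2_eq_square)
  qed
  show ?thesis using D unfolding E Lf_def[abs_def] .
qed

lemma Lf_cont: "isCont Lf u"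
  using Lf_deriv DERIV_isCont by blast

lemma Lf_less: "a < b \<Longrightarrow> Lf a < Lf b"
  by (rule DERIV_pos_imp_increasing[of a b Lf]) (auto intro!: exI Lf_deriv simp: add_pos_nonneg)

lemma Lf_le_iff: "Lf a \<le> Lf b \<longleftrightarrow> a \<le> b"
  by (metis Lf_less linorder_not_le order_le_less)

lemma Lf_inj: "inj Lf"
  by (intro injI) (metis Lf_less linorder_neqE_linordered_idom order_less_irrefl)

lemma Lf_minus: "Lf (- u) = - Lf u"
  unfolding Lf_def by (simp add: field_simps)

lemma Lf_ge: "u \<ge> 0 \<Longrightarrow> Lf u \<ge> u / 2"
proof -
  assume u: "u \<ge> 0"
  have "u * sqrt (1 + u^2) \<ge> u * 1" using u by (intro mult_left_mono) auto
  moreover have "arsinh u \<ge> 0" using u arsinh_real_neg_iff[of u] by linarith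
  ultimately show ?thesis unfolding Lf_def by simp
qed

lemma Lf_surj: "surj Lf"
proof -
  have pos: "\<exists>u. Lf u = y" if y: "y \<ge> 0" for y
  proof -
    have "Lf 0 \<le> y" using y by (simp add: Lf_def)
    moreover have "y \<le> Lf (2*y)" using Lf_ge[of "2*y"] y by simp
    ultimately show ?thesis using IVT[of Lf 0 y "2*y"] y Lf_cont by auto
  qed
  have "\<forall>y. \<exists>u. Lf u = y"
  proof
    fix y :: real
    show "\<exists>u. Lf u = y"
    proof (cases "y \<ge> 0")
      case True then show ?thesis using pos by blast
    next
      case False
      then obtain u where "Lf u = -y" using pos[of "-y"] by auto
      then have "Lf (-u) = y" by (simp add: Lf_minus)
      then show ?thesis by blast
    qed
  qed
  then show ?thesis by (metis surj_def)
qed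

definition gi :: "real \<Rightarrow> real" where "gi = inv Lf"

lemma Lf_gi: "Lf (gi y) = y"
  unfolding gi_def by (simp add: Lf_surj surj_f_inv_f)

lemma gi_Lf: "gi (Lf u) = u"
  unfolding gi_def by (simp add: Lf_inj)

lemma gi_less_iff: "gi a < gi b \<longleftrightarrow> a < b"
proof -
  have "gi a < gi b \<longleftrightarrow> Lf (gi a) < Lf (gi b)" using Lf_le_iff by (meson not_le)
  then show ?thesis by (simp add: Lf_gi)
qed

lemma gi_minus: "gi (- y) = - gi y"
proof -
  have "gi (- y) = gi (Lf (- gi y))" by (simp add: Lf_minus Lf_gi)
  then show ?thesis by (simp add: gi_Lf)
qed

lemma gi_zero: "gi 0 = 0"
proof -
  have "gi 0 = gi (Lf 0)" by (simp add: Lf_def)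
  then show ?thesis by (simp add: gi_Lf)
qed

lemma gi_cont: "isCont gi y"
proof -
  have "isCont gi (Lf (gi y))"
    by (rule isCont_inverse_function[where d=1]) (auto simp: gi_Lf Lf_cont)
  then show ?thesis by (simp add: Lf_gi)
qed

lemma gi_deriv: "(gi has_real_derivative inverse (sqrt (1 + (gi y)^2))) (at y)"
proof (rule DERIV_inverse_function[where f=Lf and a="y-1" and b="y+1"])
  show "(Lf has_real_derivative sqrt (1 + (gi y)^2)) (at (gi y))" by (rule Lf_deriv)
  show "sqrt (1 + (gi y)^2) \<noteq> 0" by simp
  show "y - 1 < y" by simp
  show "y < y + 1" by simp
  show "\<And>z. y - 1 < z \<Longrightarrow> z < y + 1 \<Longrightarrow> Lf (gi z) = z" by (rule Lf_gi)
  show "isCont gi y" by (rule gi_cont)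
qed

definition kd :: "real \<Rightarrow> real" where
  "kd \<eta> = - gi (- (\<eta> / 2)) / (2 * (1 + (gi (- (\<eta> / 2)))^2))"

lemma kf_eq: "kf \<eta> = sqrt (1 + (gi (- (\<eta> / 2)))^2)"
  unfolding kf_def Qf_def gi_def by simp

lemma kf_deriv: "(kf has_real_derivative kd \<eta>) (at \<eta>)"
proof -
  define u where "u = gi (- (\<eta> / 2))"
  define D where "D = inverse (sqrt (1 + u * u)) * (- 1 / 2)"
  have pos: "1 + u * u > 0" by (metis onep(1) power2_eq_square)
  have d0: "((\<lambda>\<eta>::real. - (\<eta> / 2)) has_real_derivative (- 1 / 2)) (at \<eta>)"
    using DERIV_minus[OF DERIV_cdivide[OF DERIV_ident, of 2]] by simp
  have d: "((\<lambda>\<eta>. gi (- (\<eta> / 2))) has_real_derivative D) (at \<eta>)"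
    using DERIV_chain2[OF gi_deriv[of "- (\<eta> / 2)"] d0] unfolding D_def u_def
    by (simp add: power2_eq_square)
  have d2: "((\<lambda>\<eta>. 1 + gi (- (\<eta> / 2)) * gi (- (\<eta> / 2))) has_real_derivative 2 * D * u) (at \<eta>)"
    using DERIV_add[OF DERIV_const[of 1] DERIV_mult[OF d d]] unfolding u_def by (simp add: algebra_simps)
  have d3: "((\<lambda>\<eta>. sqrt (1 + gi (- (\<eta> / 2)) * gi (- (\<eta> / 2)))) has_real_derivative
       inverse (sqrt (1 + u * u)) / 2 * (2 * D * u)) (at \<eta>)"
    using DERIV_chain2[OF DERIV_real_sqrt[OF pos[unfolded u_def]] d2[unfolded u_def]] unfolding u_def .
  have s: "sqrt (1+u*u) * sqrt (1+u*u) = 1 + u*u" using pos by simp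
  have e: "inverse (sqrt (1 + u * u)) * inverse (sqrt (1 + u * u)) = inverse (1 + u * u)"
    by (simp only: inverse_mult_distrib[symmetric] s)
  have "inverse (sqrt (1 + u * u)) / 2 * (2 * D * u)
      = - u * (inverse (sqrt (1 + u * u)) * inverse (sqrt (1 + u * u))) / 2"
    unfolding D_def by (simp add: algebra_simps)
  also have "\<dots> = kd \<eta>" unfolding e kd_def u_def by (simp add: divide_simps power2_eq_square)
  finally have "inverse (sqrt (1 + u * u)) / 2 * (2 * D * u) = kd \<eta>" .
  moreover have "kf = (\<lambda>\<eta>. sqrt (1 + gi (- (\<eta> / 2)) * gi (- (\<eta> / 2))))"
    by (rule ext) (simp add: kf_eq power2_eq_square)
  ultimately show ?thesis using d3 by simp
qed

lemma deriv_kf: "deriv kf \<eta> = kd \<eta>"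
  using kf_deriv DERIV_imp_deriv by blast

lemma kf_ge1: "kf \<eta> \<ge> 1"
  unfolding kf_eq by simp

lemma kf_cont: "isCont kf \<eta>"
  using kf_deriv DERIV_isCont by blast

lemma kd_cont: "isCont kd \<eta>"
proof -
  have c0: "isCont (\<lambda>\<eta>::real. - (\<eta> / 2)) \<eta>" by simp
  have c: "isCont (\<lambda>\<eta>. gi (- (\<eta> / 2))) \<eta>" by (rule isCont_o2[OF c0 gi_cont])
  have "isCont (\<lambda>\<eta>. - gi (- (\<eta> / 2)) / (2 * (1 + (gi (- (\<eta> / 2)))^2))) \<eta>"
    by (intro isCont_divide isCont_minus isCont_mult isCont_add isCont_power continuous_const c) simp
  then show ?thesis unfolding kd_def[abs_def] .
qed

lemma kd_pos: "\<eta> > 0 \<Longrightarrow> kd \<eta> > 0"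
proof -
  assume "\<eta> > 0"
  then have "gi (- (\<eta> / 2)) < gi 0" by (simp add: gi_less_iff)
  then have "gi (- (\<eta> / 2)) < 0" by (simp add: gi_zero)
  then show ?thesis unfolding kd_def by (simp add: divide_neg_pos)
qed

lemma kd_minus: "kd (- \<eta>) = - kd \<eta>"
  unfolding kd_def by (simp add: gi_minus)

lemma kf_minus: "kf (- \<eta>) = kf \<eta>"
  unfolding kf_eq by (simp add: gi_minus)

lemma ff_eq: "ff \<eta> = kd \<eta> / sqrt (kf \<eta>)"
  unfolding ff_def deriv_kf ..

lemma ff_cont: "isCont ff \<eta>"
proof -
  have "sqrt (kf \<eta>) \<noteq> 0" using kf_ge1[of \<eta>] by auto
  then show ?thesis unfolding ff_eq[abs_def]
    using isCont_divide[OF kd_cont isCont_o2[OF kf_cont isCont_real_sqrt]] by blast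
qed

lemma transport_lower:
  fixes u ut ux a :: "real \<Rightarrow> real \<Rightarrow> real" and T t0 x0 K \<delta> :: real
  assumes der: "\<And>t x. t \<in> {0..<T} \<Longrightarrow> ((\<lambda>p. u (fst p) (snd p)) has_derivative
        (\<lambda>h. ut t x * fst h + ux t x * snd h)) (at (t, x) within ({0..<T} \<times> UNIV))"
    and t0: "0 \<le> t0" "t0 < T" and K: "0 \<le> K" and dl: "0 < \<delta>"
    and eqn: "\<And>t x. t \<in> {0..t0} \<Longrightarrow> x \<le> x0 \<Longrightarrow> u t0 x0 - \<delta> * t0 \<le> u t x \<Longrightarrow> u t x \<le> u t0 x0 \<Longrightarrow>
        ut t x = - a t x * ux t x \<and> 0 \<le> a t x \<and> a t x \<le> K"
  shows "\<exists>x. x0 - K * t0 \<le> x \<and> x \<le> x0 \<and> u t0 x0 - \<delta> * t0 \<le> u 0 x"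
proof -
  define R where "R = u t0 x0"
  define bnd where "bnd s = R - \<delta> * (t0 - s)" for s
  define U where "U = (\<lambda>p. u (fst p) (snd p))"
  define Dom where "Dom = ({0..<T} \<times> (UNIV::real set))"
  have derU: "\<And>p. p \<in> Dom \<Longrightarrow> (U has_derivative (\<lambda>h. ut (fst p) (snd p) * fst h + ux (fst p) (snd p) * snd h)) (at p within Dom)"
    unfolding U_def Dom_def using der by (auto simp: mem_Times_iff)
  have contU: "continuous_on Dom U"
    unfolding continuous_on_eq_continuous_within using derU has_derivative_continuous by blast
  define box where "box = {0..t0} \<times> {x0 - K * t0..x0}"
  have box_sub: "box \<subseteq> Dom" unfolding box_def Dom_def using t0 by auto
  have cbox: "compact box" unfolding box_def by (intro compact_Times compact_Icc)
  define Z where "Z = {p \<in> box. x0 - K * (t0 - fst p) \<le> snd p} \<inter> {p \<in> box. bnd (fst p) \<le> U p}"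
  have cl1: "closed {p \<in> box. x0 - K * (t0 - fst p) \<le> snd p}"
    by (rule continuous_on_closed_Collect_le) (auto intro!: continuous_intros compact_imp_closed[OF cbox])
  have cl2: "closed {p \<in> box. bnd (fst p) \<le> U p}"
    unfolding bnd_def
    by (rule continuous_on_closed_Collect_le)
       (auto intro!: continuous_intros compact_imp_closed[OF cbox] continuous_on_subset[OF contU box_sub])
  have cZ: "compact Z"
  proof -
    have "closed Z" unfolding Z_def using cl1 cl2 by blast
    moreover have "bounded Z" using compact_imp_bounded[OF cbox] unfolding Z_def
      by (rule bounded_subset) auto
    ultimately show ?thesis using compact_eq_bounded_closed by blast
  qed
  define P where "P = fst ` Z"
  have cP: "closed P" unfolding P_def
    by (intro compact_imp_closed compact_continuous_image continuous_intros cZ)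
  have memZ: "(s, x) \<in> Z \<longleftrightarrow> s \<in> {0..t0} \<and> x \<le> x0 \<and> x0 - K * (t0 - s) \<le> x \<and> bnd s \<le> u s x" for s x
  proof -
    have "s \<in> {0..t0} \<Longrightarrow> x0 - K * (t0 - s) \<le> x \<Longrightarrow> x0 - K * t0 \<le> x"
      using K by (smt (verit) atLeastAtMost_iff mult_left_mono)
    then show ?thesis unfolding Z_def box_def U_def by auto
  qed
  define A where "A = {t \<in> {0..t0}. {t..t0} \<subseteq> P}"
  have t0A: "t0 \<in> A"
  proof -
    have "(t0, x0) \<in> Z" unfolding memZ bnd_def R_def using t0 by auto
    then have "t0 \<in> P" unfolding P_def by force
    then show ?thesis unfolding A_def using t0 by auto
  qed
  define t1 where "t1 = Inf A"
  have bddA: "bdd_below A" unfolding A_def by (rule bdd_belowI[where m=0]) auto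
  have t1le: "t1 \<le> t0" unfolding t1_def using t0A bddA by (rule cInf_lower)
  have t1ge: "0 \<le> t1" unfolding t1_def using t0A by (intro cInf_greatest) (auto simp: A_def)
  have sub1: "{t1<..t0} \<subseteq> P"
  proof
    fix s assume s: "s \<in> {t1<..t0}"
    then have "Inf A < s" unfolding t1_def by simp
    then obtain t where tA: "t \<in> A" and "t < s" using cInf_less_iff[of A s] t0A bddA by auto
    then show "s \<in> P" using s unfolding A_def by auto
  qed
  have sub2: "{t1..t0} \<subseteq> P"
  proof (cases "t1 < t0")
    case True
    then have "closure {t1<..t0} \<subseteq> P" using sub1 cP closure_minimal by blast
    then show ?thesis using closure_greaterThanAtMost[OF True] by simp
  next
    case False
    then have "t1 = t0" using t1le by simp
    then show ?thesis using t0A unfolding A_def by auto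
  qed
  have t1A: "t1 \<in> A" unfolding A_def using sub2 t1ge t1le by auto
  show ?thesis
  proof (cases "t1 = 0")
    case True
    then have "0 \<in> P" using sub2 t0 by auto
    then obtain x where "(0, x) \<in> Z" unfolding P_def by force
    then show ?thesis unfolding memZ bnd_def R_def by auto
  next
    case False
    then have t1pos: "t1 > 0" using t1ge by simp
    obtain x1 where Z1: "(t1, x1) \<in> Z" using sub2 t1le unfolding P_def by force
    then have x1: "x1 \<le> x0" "x0 - K * (t0 - t1) \<le> x1" "bnd t1 \<le> u t1 x1"
      unfolding memZ by auto
    have "\<exists>h>0. h \<le> t1 \<and> {t1 - h..t1} \<subseteq> P"
    proof (cases "bnd t1 < u t1 x1")
      case True
      have p1: "(t1, x1) \<in> Dom" unfolding Dom_def using t1ge t1le t0 by auto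
      obtain d where d: "d > 0" and dd: "\<And>y. y \<in> Dom \<Longrightarrow> dist y (t1, x1) < d \<Longrightarrow> dist (U y) (U (t1, x1)) < u t1 x1 - bnd t1"
        using contU p1 True unfolding continuous_on_iff by (metis diff_gt_0_iff_gt)
      define h where "h = min (d/2) t1"
      have h: "h > 0" "h \<le> t1" "h < d" unfolding h_def using d t1pos by auto
      have "s \<in> P" if s: "s \<in> {t1 - h..t1}" for s
      proof -
        have sD: "(s, x1) \<in> Dom" unfolding Dom_def using s h t1le t0 by auto
        have "dist (s, x1) (t1, x1) < d" using s h by (simp add: dist_Pair_Pair dist_real_def)
        then have "dist (u s x1) (u t1 x1) < u t1 x1 - bnd t1" using dd[OF sD] unfolding U_def by simp
        then have "u s x1 > bnd t1" by (simp add: dist_real_def)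
        moreover have "bnd s \<le> bnd t1" unfolding bnd_def using s dl by (simp add: mult_left_mono)
        moreover have "x0 - K * (t0 - s) \<le> x1"
          using x1(2) s K by (smt (verit) atLeastAtMost_iff mult_left_mono)
        ultimately have "(s, x1) \<in> Z" unfolding memZ using s h x1 t1le by auto
        then show ?thesis unfolding P_def by force
      qed
      then show ?thesis using h by blast
    next
      case False
      then have ueq: "u t1 x1 = bnd t1" using x1 by simp
      have rng: "R - \<delta> * t0 \<le> u t1 x1" "u t1 x1 \<le> R" unfolding ueq bnd_def using dl t1ge t1le
        by (auto simp: mult_left_mono)
      have e1: "ut t1 x1 = - a t1 x1 * ux t1 x1" and a0: "0 \<le> a t1 x1" and aK: "a t1 x1 \<le> K"
        using eqn[of t1 x1] rng x1 t1ge t1le unfolding R_def by auto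
      define c where "c = (if ux t1 x1 \<ge> 0 then 0 else K)"
      have c: "0 \<le> c" "c \<le> K" unfolding c_def using K by auto
      have key: "0 \<le> ut t1 x1 * (- \<tau>) + ux t1 x1 * (- c * \<tau>)" if "\<tau> \<ge> 0" for \<tau>
      proof -
        have "ut t1 x1 * (- \<tau>) + ux t1 x1 * (- c * \<tau>) = \<tau> * (ux t1 x1 * (a t1 x1 - c))"
          unfolding e1 by (simp add: algebra_simps)
        moreover have "0 \<le> ux t1 x1 * (a t1 x1 - c)"
        proof (cases "ux t1 x1 \<ge> 0")
          case True then show ?thesis unfolding c_def using a0 by simp
        next
          case False then show ?thesis unfolding c_def using aK
            by (simp add: mult_nonpos_nonpos)
        qed
        ultimately show ?thesis using that by simp
      qed
      have p1: "(t1, x1) \<in> Dom" unfolding Dom_def using t1ge t1le t0 by auto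
      define e where "e = \<delta> / (1 + K)"
      have e: "e > 0" unfolding e_def using dl K by simp
      obtain d where d: "d > 0" and dd: "\<And>y. y \<in> Dom \<Longrightarrow> norm (y - (t1, x1)) < d \<Longrightarrow>
          norm (U y - U (t1, x1) - (ut t1 x1 * fst (y - (t1, x1)) + ux t1 x1 * snd (y - (t1, x1))))
            \<le> e * norm (y - (t1, x1))"
      proof -
        have "(U has_derivative (\<lambda>h. ut t1 x1 * fst h + ux t1 x1 * snd h)) (at (t1, x1) within Dom)"
          using derU[OF p1] by simp
        then have "\<exists>d>0. \<forall>y\<in>Dom. norm (y - (t1, x1)) < d \<longrightarrow>
          norm (U y - U (t1, x1) - (ut t1 x1 * fst (y - (t1, x1)) + ux t1 x1 * snd (y - (t1, x1))))
            \<le> e * norm (y - (t1, x1))"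
          using e unfolding has_derivative_within_alt by blast
        then show ?thesis using that by blast
      qed
      define h where "h = min (d / (2 * (1 + K))) t1"
      have hle: "h \<le> d / (2 * (1 + K))" unfolding h_def by simp
      have "h * (1 + K) \<le> d / (2 * (1 + K)) * (1 + K)" using hle K by (intro mult_right_mono) auto
      also have "\<dots> = d / 2" using K by (simp add: field_simps)
      finally have h: "h > 0" "h \<le> t1" "h * (1 + K) < d" unfolding h_def using d t1pos K
        by auto
      have "s \<in> P" if s: "s \<in> {t1 - h..t1}" for s
      proof -
        define \<tau> where "\<tau> = t1 - s"
        have tau: "0 \<le> \<tau>" "\<tau> \<le> h" unfolding \<tau>_def using s by auto
        define y where "y = (s, x1 - c * \<tau>)"
        have yD: "y \<in> Dom" unfolding Dom_def y_def using s h t1le t0 by auto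
        have ydiff: "y - (t1, x1) = (- \<tau>, - c * \<tau>)" unfolding y_def \<tau>_def by simp
        have nrm: "norm (y - (t1, x1)) \<le> (1 + K) * \<tau>"
        proof -
          have "norm (y - (t1, x1)) \<le> norm (- \<tau>) + norm (- c * \<tau>)" unfolding ydiff by (rule norm_Pair_le)
          also have "\<dots> = \<tau> + c * \<tau>" using tau c by simp
          also have "\<dots> \<le> (1 + K) * \<tau>" using mult_right_mono[OF c(2) tau(1)] by (simp add: algebra_simps)
          finally show ?thesis .
        qed
        have "(1 + K) * \<tau> \<le> (1 + K) * h" using tau K by (simp add: mult_left_mono)
        then have "norm (y - (t1, x1)) < d" using nrm h by (simp add: algebra_simps)
        then have est: "norm (U y - U (t1, x1) - (ut t1 x1 * (- \<tau>) + ux t1 x1 * (- c * \<tau>))) \<le> e * norm (y - (t1, x1))"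
          using dd[OF yD] unfolding ydiff by simp
        have "e * norm (y - (t1, x1)) \<le> e * ((1 + K) * \<tau>)" using nrm e by (simp add: mult_left_mono)
        also have "\<dots> = \<delta> * \<tau>" unfolding e_def using K by simp
        finally have "U y \<ge> U (t1, x1) - \<delta> * \<tau>" using est key[OF tau(1)] by (simp add: abs_le_iff)
        then have "u s (x1 - c * \<tau>) \<ge> bnd s" unfolding U_def y_def using ueq
          by (simp add: bnd_def \<tau>_def algebra_simps)
        moreover have "x0 - K * (t0 - s) \<le> x1 - c * \<tau>"
        proof -
          have "c * \<tau> \<le> K * \<tau>" using mult_right_mono[OF c(2) tau(1)] .
          then show ?thesis using x1(2) unfolding \<tau>_def by (simp add: algebra_simps)
        qed
        moreover have "x1 - c * \<tau> \<le> x0" using x1 c tau by (smt (verit) mult_nonneg_nonneg)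
        ultimately have "(s, x1 - c * \<tau>) \<in> Z" unfolding memZ using s h t1le by auto
        then show ?thesis unfolding P_def by force
      qed
      then show ?thesis using h by blast
    qed
    then obtain h where h: "h > 0" "h \<le> t1" "{t1 - h..t1} \<subseteq> P" by blast
    have "{t1 - h..t0} \<subseteq> P"
    proof
      fix x assume "x \<in> {t1 - h..t0}"
      then have "x \<in> {t1 - h..t1} \<or> x \<in> {t1..t0}" by auto
      then show "x \<in> P" using h sub2 by blast
    qed
    then have "t1 - h \<in> A" unfolding A_def using h t1le by auto
    then have "t1 \<le> t1 - h" unfolding t1_def using bddA by (rule cInf_lower)
    then show ?thesis using h by simp
  qed
qed

lemma lip_from_deriv:
  fixes f f' :: "real \<Rightarrow> real"
  assumes d: "\<And>z. a \<le> z \<Longrightarrow> z \<le> b \<Longrightarrow> (f has_real_derivative f' z) (at z)"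
    and bd: "\<And>z. a \<le> z \<Longrightarrow> z \<le> b \<Longrightarrow> \<bar>f' z\<bar> \<le> L"
    and xy: "a \<le> x" "x \<le> b" "a \<le> y" "y \<le> b"
  shows "\<bar>f y - f x\<bar> \<le> L * \<bar>y - x\<bar>"
proof -
  have main: "\<bar>f q - f p\<bar> \<le> L * \<bar>q - p\<bar>" if pq: "p < q" "a \<le> p" "q \<le> b" for p q
  proof -
    obtain z where z: "p < z" "z < q" "f q - f p = (q - p) * f' z"
      using MVT2[OF pq(1), of f f'] d pq by force
    have "\<bar>f q - f p\<bar> = \<bar>q - p\<bar> * \<bar>f' z\<bar>" using z by (simp add: abs_mult)
    also have "\<dots> \<le> \<bar>q - p\<bar> * L" using bd[of z] z pq by (intro mult_left_mono) auto
    finally show ?thesis by (simp add: mult.commute)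
  qed
  consider "x < y" | "x = y" | "y < x" by linarith
  then show ?thesis
  proof cases
    case 1 then show ?thesis using main xy by blast
  next
    case 2 then show ?thesis by simp
  next
    case 3 then show ?thesis using main[of y x] xy by (simp add: abs_minus_commute)
  qed
qed

lemma gronwall_sq:
  fixes d d' :: "real \<Rightarrow> real"
  assumes tau: "0 \<le> \<tau>" and L: "0 \<le> L"
    and dd: "\<And>s. s \<in> {0..\<tau>} \<Longrightarrow> (d has_real_derivative d' s) (at s within {0..\<tau>})"
    and bd: "\<And>s. s \<in> {0..\<tau>} \<Longrightarrow> \<bar>d' s\<bar> \<le> L * \<bar>d s\<bar>"
    and s: "s \<in> {0..\<tau>}"
  shows "\<bar>d s\<bar> \<le> \<bar>d 0\<bar> * exp (L * s)"
proof -
  define \<phi> where "\<phi> r = exp (- 2 * L * r) * (d r * d r)" for r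
  define \<phi>' where "\<phi>' r = exp (- 2 * L * r) * (- 2 * L) * (d r * d r) + (d' r * d r + d' r * d r) * exp (- 2 * L * r)" for r
  have dphi: "(\<phi> has_real_derivative \<phi>' r) (at r within {0..\<tau>})" if r: "r \<in> {0..\<tau>}" for r
  proof -
    have e: "((\<lambda>r. exp (- 2 * L * r)) has_real_derivative exp (- 2 * L * r) * (- 2 * L)) (at r within {0..\<tau>})"
      using DERIV_chain2[OF DERIV_exp, of "\<lambda>r. - 2 * L * r" "- 2 * L" r "{0..\<tau>}"]
        DERIV_cmult[OF DERIV_ident, of "- 2 * L" r "{0..\<tau>}"] by simp
    show ?thesis unfolding \<phi>_def \<phi>'_def using DERIV_mult[OF e DERIV_mult[OF dd[OF r] dd[OF r]]] .
  qed
  have nonpos: "\<phi>' r \<le> 0" if r: "r \<in> {0..\<tau>}" for r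
  proof -
    have "d' r * d r \<le> \<bar>d' r\<bar> * \<bar>d r\<bar>" by (metis abs_ge_self abs_mult)
    also have "\<dots> \<le> L * \<bar>d r\<bar> * \<bar>d r\<bar>" using bd[OF r] by (intro mult_right_mono) auto
    also have "\<dots> = L * (d r * d r)" by (simp add: abs_mult_self_eq)
    finally have "d' r * d r + d' r * d r \<le> 2 * L * (d r * d r)" by linarith
    then have "- 2 * L * (d r * d r) + (d' r * d r + d' r * d r) \<le> 0" by simp
    then have "exp (- 2 * L * r) * (- 2 * L * (d r * d r) + (d' r * d r + d' r * d r)) \<le> 0"
      by (simp add: mult_nonneg_nonpos)
    then show ?thesis unfolding \<phi>'_def by (simp add: algebra_simps)
  qed
  have "\<phi> s \<le> \<phi> 0"
  proof -
    have "\<And>x. 0 \<le> x \<Longrightarrow> x \<le> s \<Longrightarrow> (\<phi> has_derivative (*) (\<phi>' x)) (at x within {0..s})"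
    proof -
      fix x assume "0 \<le> x" "x \<le> s"
      then have "x \<in> {0..\<tau>}" "{0..s} \<subseteq> {0..\<tau>}" using s by auto
      then have "(\<phi> has_real_derivative \<phi>' x) (at x within {0..s})"
        using dphi has_field_derivative_subset by blast
      then show "(\<phi> has_derivative (*) (\<phi>' x)) (at x within {0..s})"
        by (simp add: has_field_derivative_def)
    qed
    then obtain x where x: "x \<in> {0..s}" "\<phi> s - \<phi> 0 = \<phi>' x * (s - 0)"
      using mvt_very_simple[of 0 s \<phi> "\<lambda>x. (*) (\<phi>' x)"] s by auto
    have "\<phi>' x * (s - 0) \<le> 0" using nonpos[of x] x s by (simp add: mult_nonpos_nonneg)
    then show ?thesis using x by simp
  qed
  then have "exp (- 2 * L * s) * (d s * d s) \<le> d 0 * d 0" unfolding \<phi>_def by simp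
  then have "exp (2 * L * s) * (exp (- 2 * L * s) * (d s * d s)) \<le> exp (2 * L * s) * (d 0 * d 0)"
    by (intro mult_left_mono) auto
  then have "d s * d s \<le> exp (2 * L * s) * (d 0 * d 0)" by (simp add: exp_minus_inverse mult.assoc[symmetric] exp_add[symmetric])
  also have "\<dots> = (\<bar>d 0\<bar> * exp (L * s)) * (\<bar>d 0\<bar> * exp (L * s))"
    by (simp add: exp_add[symmetric] algebra_simps abs_mult_self_eq)
  finally have "\<bar>d s\<bar> * \<bar>d s\<bar> \<le> (\<bar>d 0\<bar> * exp (L * s)) * (\<bar>d 0\<bar> * exp (L * s))"
    by (simp add: abs_mult_self_eq)
  then show ?thesis
  proof (rule contrapos_pp)
    assume "\<not> \<bar>d s\<bar> \<le> \<bar>d 0\<bar> * exp (L * s)"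
    then have lt: "\<bar>d 0\<bar> * exp (L * s) < \<bar>d s\<bar>" by simp
    have nn: "0 \<le> \<bar>d 0\<bar> * exp (L * s)" by simp
    have pos: "0 < \<bar>d s\<bar>" using lt nn by linarith
    have "(\<bar>d 0\<bar> * exp (L * s)) * (\<bar>d 0\<bar> * exp (L * s)) < \<bar>d s\<bar> * \<bar>d s\<bar>"
      using mult_strict_mono[OF lt lt pos nn] .
    then show "\<not> \<bar>d s\<bar> * \<bar>d s\<bar> \<le> (\<bar>d 0\<bar> * exp (L * s)) * (\<bar>d 0\<bar> * exp (L * s))" by simp
  qed
qed

lemma variational:
  fixes F Fx X :: "real \<Rightarrow> real \<Rightarrow> real" and C :: "real \<Rightarrow> real" and Te \<beta> t :: real
  assumes Te: "0 < Te"
    and Xd: "\<And>b t. t \<in> {0..Te} \<Longrightarrow> ((\<lambda>s. X s b) has_real_derivative (- F t (X t b))) (at t within {0..Te})"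
    and X0: "\<And>b. X 0 b = b"
    and Fd: "\<And>t x. t \<in> {0..Te} \<Longrightarrow> ((\<lambda>x. F t x) has_real_derivative Fx t x) (at x)"
    and Fxc: "continuous_on ({0..Te} \<times> UNIV) (\<lambda>p. Fx (fst p) (snd p))"
    and Cd: "\<And>t. t \<in> {0..Te} \<Longrightarrow> ((\<lambda>b. X t b) has_real_derivative C t) (at \<beta>)"
    and t: "t \<in> {0..Te}"
  shows "C t = 1 - integral {0..t} (\<lambda>s. Fx s (X s \<beta>) * C s)"
proof -
  have contX: "continuous_on {0..Te} (\<lambda>s. X s b)" for b
    by (rule DERIV_continuous_on[OF Xd])
  obtain M0 where M0: "M0 > 0" "\<And>s. s \<in> {0..Te} \<Longrightarrow> \<bar>X s \<beta>\<bar> \<le> M0"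
  proof -
    have "bounded ((\<lambda>s. X s \<beta>) ` {0..Te})"
      by (intro compact_imp_bounded compact_continuous_image contX compact_Icc)
    then show ?thesis using that unfolding bounded_pos by auto
  qed
  define Bx where "Bx = {0..Te} \<times> {- M0 - 1..M0 + 1}"
  obtain L where L: "L > 0" "\<And>p. p \<in> Bx \<Longrightarrow> \<bar>Fx (fst p) (snd p)\<bar> \<le> L"
  proof -
    have "bounded ((\<lambda>p. Fx (fst p) (snd p)) ` Bx)" unfolding Bx_def
      by (intro compact_imp_bounded compact_continuous_image continuous_on_subset[OF Fxc]
          compact_Times compact_Icc) auto
    then show ?thesis using that unfolding bounded_pos by auto
  qed
  have Lip: "\<bar>F s y - F s x\<bar> \<le> L * \<bar>y - x\<bar>"
    if s: "s \<in> {0..Te}" and x: "x \<in> {- M0 - 1..M0 + 1}" and y: "y \<in> {- M0 - 1..M0 + 1}" for s x y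
  proof (rule lip_from_deriv[where a="- M0 - 1" and b="M0 + 1" and f'="Fx s"])
    show "\<And>z. - M0 - 1 \<le> z \<Longrightarrow> z \<le> M0 + 1 \<Longrightarrow> ((\<lambda>x. F s x) has_real_derivative Fx s z) (at z)"
      using Fd[OF s] by blast
    show "\<And>z. - M0 - 1 \<le> z \<Longrightarrow> z \<le> M0 + 1 \<Longrightarrow> \<bar>Fx s z\<bar> \<le> L"
      using L(2) s unfolding Bx_def by fastforce
  qed (use x y in auto)
  define h0 where "h0 = exp (- (L * Te)) / 2"
  have h0: "0 < h0" "h0 < 1" "h0 * exp (L * Te) = 1 / 2"
  proof -
    have e1: "exp (- (L * Te)) \<le> 1" using L Te by simp
    have e0: "exp (- (L * Te)) > 0" by simp
    show "0 < h0" "h0 < 1" unfolding h0_def using e1 e0 by linarith+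
    show "h0 * exp (L * Te) = 1 / 2" unfolding h0_def by (simp add: exp_minus field_simps)
  qed
  have gw: "\<bar>X s (\<beta> + h) - X s \<beta>\<bar> \<le> h * exp (L * s)"
    if h: "0 < h" "h \<le> h0" and s: "s \<in> {0..Te}" for h s
  proof -
    define dd where "dd s = X s (\<beta> + h) - X s \<beta>" for s
    define dd' where "dd' s = - F s (X s (\<beta> + h)) - - F s (X s \<beta>)" for s
    have ddd: "(dd has_real_derivative dd' s) (at s within {0..Te})" if "s \<in> {0..Te}" for s
      unfolding dd_def dd'_def using DERIV_diff[OF Xd[OF that] Xd[OF that]] .
    have cdd: "continuous_on {0..Te} dd" by (rule DERIV_continuous_on[OF ddd])
    have dd0: "dd 0 = h" unfolding dd_def X0 by simp
    have bnd: "\<bar>dd' s\<bar> \<le> L * \<bar>dd s\<bar>" if s: "s \<in> {0..Te}" and le: "\<bar>dd s\<bar> \<le> 1" for s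
    proof -
      have "X s \<beta> \<in> {- M0 - 1..M0 + 1}" using M0(2)[OF s] by auto
      moreover have "X s (\<beta> + h) \<in> {- M0 - 1..M0 + 1}" using M0(2)[OF s] le unfolding dd_def by auto
      ultimately have "\<bar>F s (X s (\<beta> + h)) - F s (X s \<beta>)\<bar> \<le> L * \<bar>X s (\<beta> + h) - X s \<beta>\<bar>"
        using Lip[OF s] by blast
      then show ?thesis unfolding dd_def dd'_def by simp
    qed
    have G: "\<bar>dd \<tau>\<bar> \<le> h * exp (L * \<tau>)" if tau: "\<tau> \<in> {0..Te}" and all: "\<forall>s\<in>{0..\<tau>}. \<bar>dd s\<bar> \<le> 1" for \<tau>
    proof -
      have sub: "{0..\<tau>} \<subseteq> {0..Te}" using tau by auto
      have "\<bar>dd \<tau>\<bar> \<le> \<bar>dd 0\<bar> * exp (L * \<tau>)"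
      proof (rule gronwall_sq[where d'=dd' and L=L and \<tau>=\<tau>])
        show "\<And>s. s \<in> {0..\<tau>} \<Longrightarrow> (dd has_real_derivative dd' s) (at s within {0..\<tau>})"
          using ddd sub has_field_derivative_subset by blast
        show "\<And>s. s \<in> {0..\<tau>} \<Longrightarrow> \<bar>dd' s\<bar> \<le> L * \<bar>dd s\<bar>" using bnd sub all by blast
      qed (use tau L in auto)
      then show ?thesis using dd0 h by simp
    qed
    have lt1: "\<forall>s\<in>{0..Te}. \<bar>dd s\<bar> < 1"
    proof (rule ccontr)
      assume neg: "\<not> (\<forall>s\<in>{0..Te}. \<bar>dd s\<bar> < 1)"
      define E where "E = {s \<in> {0..Te}. 1 \<le> \<bar>dd s\<bar>}"
      have En: "E \<noteq> {}" using neg unfolding E_def by force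
      have Ec: "closed E" unfolding E_def
        by (rule continuous_on_closed_Collect_le) (auto intro!: continuous_intros cdd)
      have Eb: "bdd_below E" unfolding E_def by (rule bdd_belowI[where m=0]) auto
      define \<tau> where "\<tau> = Inf E"
      have tauE: "\<tau> \<in> E" unfolding \<tau>_def using closed_contains_Inf[OF En Eb Ec] .
      then have tau: "\<tau> \<in> {0..Te}" "1 \<le> \<bar>dd \<tau>\<bar>" unfolding E_def by auto
      have taupos: "0 < \<tau>"
      proof (rule ccontr)
        assume "\<not> 0 < \<tau>"
        then have "\<tau> = 0" using tau by auto
        then show False using tau dd0 h h0 by simp
      qed
      define G' where "G' = {s \<in> {0..Te}. \<bar>dd s\<bar> \<le> 1}"
      have G'c: "closed G'" unfolding G'_def
        by (rule continuous_on_closed_Collect_le) (auto intro!: continuous_intros cdd)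
      have "{0..<\<tau>} \<subseteq> G'"
      proof
        fix s assume s: "s \<in> {0..<\<tau>}"
        have "s \<notin> E"
        proof
          assume "s \<in> E"
          then have "\<tau> \<le> s" unfolding \<tau>_def using Eb by (rule cInf_lower)
          then show False using s by simp
        qed
        then show "s \<in> G'" using s tau unfolding E_def G'_def by auto
      qed
      then have "closure {0..<\<tau>} \<subseteq> G'" using G'c closure_minimal by blast
      then have "{0..\<tau>} \<subseteq> G'" using closure_atLeastLessThan[OF taupos] by simp
      then have "\<forall>s\<in>{0..\<tau>}. \<bar>dd s\<bar> \<le> 1" unfolding G'_def by auto
      from G[OF tau(1) this] have "\<bar>dd \<tau>\<bar> \<le> h * exp (L * \<tau>)" .
      also have "\<dots> \<le> h0 * exp (L * Te)" using h tau L by (intro mult_mono) auto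
      finally show False using tau h0 by simp
    qed
    have "\<forall>s'\<in>{0..s}. \<bar>dd s'\<bar> \<le> 1"
    proof
      fix s' assume "s' \<in> {0..s}"
      then have "s' \<in> {0..Te}" using s by auto
      then show "\<bar>dd s'\<bar> \<le> 1" using lt1 by fastforce
    qed
    then have "\<bar>dd s\<bar> \<le> h * exp (L * s)" using G[OF s] by blast
    then show ?thesis unfolding dd_def .
  qed
  define hn where "hn n = h0 / real (Suc n)" for n
  have hn: "0 < hn n" "hn n \<le> h0" for n
    unfolding hn_def using h0 by (auto simp: divide_le_eq)
  have hnlim: "filterlim hn (at 0) sequentially"
  proof (rule filterlim_atI)
    show "hn \<longlonglongrightarrow> 0" unfolding hn_def using LIMSEQ_Suc[OF lim_const_over_n[of h0]] by simp
    show "\<forall>\<^sub>F x in sequentially. hn x \<noteq> 0" using hn(1) by (intro always_eventually) (metis less_irrefl)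
  qed
  have t': "0 \<le> t" "t \<le> Te" using t by auto
  have FTC: "((\<lambda>s. - F s (X s b)) has_integral (X t b - X 0 b)) {0..t}" for b
  proof (rule fundamental_theorem_of_calculus[OF t'(1)])
    fix x assume "x \<in> {0..t}"
    then have "x \<in> {0..Te}" "{0..t} \<subseteq> {0..Te}" using t by auto
    then have "((\<lambda>s. X s b) has_real_derivative (- F x (X x b))) (at x within {0..t})"
      using Xd has_field_derivative_subset by blast
    then show "((\<lambda>s. X s b) has_vector_derivative (- F x (X x b))) (at x within {0..t})"
      using has_real_derivative_iff_has_vector_derivative by blast
  qed
  define g where "g n s = (F s (X s (\<beta> + hn n)) - F s (X s \<beta>)) / hn n" for n s
  define Dn where "Dn n = (X t (\<beta> + hn n) - X t \<beta>) / hn n" for n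
  have gint: "(g n has_integral (1 - Dn n)) {0..t}" for n
  proof -
    have "((\<lambda>s. ((- F s (X s (\<beta> + hn n))) - (- F s (X s \<beta>))) * (- 1 / hn n)) has_integral
        (((X t (\<beta> + hn n) - X 0 (\<beta> + hn n)) - (X t \<beta> - X 0 \<beta>)) * (- 1 / hn n))) {0..t}"
      by (intro has_integral_mult_left has_integral_diff FTC)
    moreover have "((X t (\<beta> + hn n) - X 0 (\<beta> + hn n)) - (X t \<beta> - X 0 \<beta>)) * (- 1 / hn n) = 1 - Dn n"
      unfolding Dn_def X0 using hn(1)[of n] by (simp add: field_simps)
    moreover have "\<And>s. ((- F s (X s (\<beta> + hn n))) - (- F s (X s \<beta>))) * (- 1 / hn n) = g n s"
      unfolding g_def using hn(1)[of n] by (simp add: field_simps)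
    ultimately show ?thesis by simp
  qed
  have gdom: "\<forall>s\<in>{0..t}. norm (g n s) \<le> L * exp (L * Te)" for n
  proof
    fix s assume "s \<in> {0..t}"
    then have s: "s \<in> {0..Te}" using t by auto
    have gw1: "\<bar>X s (\<beta> + hn n) - X s \<beta>\<bar> \<le> hn n * exp (L * s)" using gw[OF hn(1) hn(2) s] .
    have "hn n * exp (L * s) \<le> h0 * exp (L * Te)" using hn[of n] L s by (intro mult_mono) auto
    then have "X s (\<beta> + hn n) \<in> {- M0 - 1..M0 + 1}" "X s \<beta> \<in> {- M0 - 1..M0 + 1}"
      using gw1 M0(2)[OF s] h0 by auto
    then have "\<bar>F s (X s (\<beta> + hn n)) - F s (X s \<beta>)\<bar> \<le> L * \<bar>X s (\<beta> + hn n) - X s \<beta>\<bar>"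
      using Lip[OF s] by blast
    also have "\<dots> \<le> L * (hn n * exp (L * s))" using gw1 L by (intro mult_left_mono) auto
    also have "\<dots> \<le> L * (hn n * exp (L * Te))" using L hn[of n] s by (intro mult_left_mono) auto
    finally have "\<bar>F s (X s (\<beta> + hn n)) - F s (X s \<beta>)\<bar> / hn n \<le> L * exp (L * Te)"
      using hn(1)[of n] by (simp add: divide_le_eq algebra_simps)
    then show "norm (g n s) \<le> L * exp (L * Te)" unfolding g_def using hn(1)[of n] by simp
  qed
  have glim: "\<forall>s\<in>{0..t}. (\<lambda>n. g n s) \<longlonglongrightarrow> Fx s (X s \<beta>) * C s"
  proof
    fix s assume "s \<in> {0..t}"
    then have s: "s \<in> {0..Te}" using t by auto
    have "((\<lambda>b. F s (X s b)) has_real_derivative Fx s (X s \<beta>) * C s) (at \<beta>)"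
      using DERIV_chain2[OF Fd[OF s] Cd[OF s]] .
    then have "((\<lambda>k. (F s (X s (\<beta> + k)) - F s (X s \<beta>)) / k) \<longlongrightarrow> Fx s (X s \<beta>) * C s) (at 0)"
      unfolding DERIV_def .
    from filterlim_compose[OF this hnlim] show "(\<lambda>n. g n s) \<longlonglongrightarrow> Fx s (X s \<beta>) * C s"
      unfolding g_def .
  qed
  have Dlim: "(\<lambda>n. 1 - Dn n) \<longlonglongrightarrow> 1 - C t"
  proof -
    have "((\<lambda>k. (X t (\<beta> + k) - X t \<beta>) / k) \<longlongrightarrow> C t) (at 0)"
      using Cd[OF t] unfolding DERIV_def .
    from filterlim_compose[OF this hnlim] have "Dn \<longlonglongrightarrow> C t" unfolding Dn_def .
    then show ?thesis by (intro tendsto_diff tendsto_const)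
  qed
  have "((\<lambda>s. Fx s (X s \<beta>) * C s) has_integral (1 - C t)) {0..t}"
    by (rule has_integral_dominated_convergence[OF gint _ gdom glim Dlim]) (rule integrable_const_ivl)
  then show ?thesis by (simp add: integral_unique)
qed

definition C1d :: "real \<Rightarrow> (real \<Rightarrow> real \<Rightarrow> real) \<Rightarrow> (real \<Rightarrow> real \<Rightarrow> real) \<Rightarrow> (real \<Rightarrow> real \<Rightarrow> real) \<Rightarrow> bool" where
  "C1d T u ut ux \<longleftrightarrow> (\<forall>t x. t \<in> {0..<T} \<longrightarrow> ((\<lambda>p. u (fst p) (snd p)) has_derivative
        (\<lambda>h. ut t x * fst h + ux t x * snd h)) (at (t, x) within ({0..<T} \<times> UNIV)))"

lemma C1d_of: "C1_partials T u ut ux \<Longrightarrow> C1d T u ut ux"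
  unfolding C1_partials_def C1d_def by auto

lemma C1d_neg: "C1d T u ut ux \<Longrightarrow> C1d T (\<lambda>t x. - u t x) (\<lambda>t x. - ut t x) (\<lambda>t x. - ux t x)"
  unfolding C1d_def
proof (intro allI impI)
  fix t x assume "\<forall>t x. t \<in> {0..<T} \<longrightarrow> ((\<lambda>p. u (fst p) (snd p)) has_derivative
        (\<lambda>h. ut t x * fst h + ux t x * snd h)) (at (t, x) within ({0..<T} \<times> UNIV))" "t \<in> {0..<T}"
  then have "((\<lambda>p. u (fst p) (snd p)) has_derivative
        (\<lambda>h. ut t x * fst h + ux t x * snd h)) (at (t, x) within ({0..<T} \<times> UNIV))" by blast
  from has_derivative_minus[OF this]
  show "((\<lambda>p. - u (fst p) (snd p)) has_derivative
        (\<lambda>h. - ut t x * fst h + - ux t x * snd h)) (at (t, x) within ({0..<T} \<times> UNIV))"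
    by (simp add: algebra_simps)
qed

lemma C1d_at: "C1d T u ut ux \<Longrightarrow> p \<in> {0..<T} \<times> UNIV \<Longrightarrow> ((\<lambda>p. u (fst p) (snd p)) has_derivative
        (\<lambda>h. ut (fst p) (snd p) * fst h + ux (fst p) (snd p) * snd h)) (at p within ({0..<T} \<times> UNIV))"
proof -
  assume C: "C1d T u ut ux" and p: "p \<in> {0..<T} \<times> UNIV"
  then have "fst p \<in> {0..<T}" by auto
  then have "((\<lambda>p. u (fst p) (snd p)) has_derivative
        (\<lambda>h. ut (fst p) (snd p) * fst h + ux (fst p) (snd p) * snd h)) (at (fst p, snd p) within ({0..<T} \<times> UNIV))"
    using C unfolding C1d_def by blast
  then show ?thesis by simp
qed

lemma C1d_cont: "C1d T u ut ux \<Longrightarrow> continuous_on ({0..<T} \<times> UNIV) (\<lambda>p. u (fst p) (snd p))"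
  unfolding continuous_on_eq_continuous_within
  using C1d_at has_derivative_continuous by blast

lemma C1d_x: "C1d T u ut ux \<Longrightarrow> t \<in> {0..<T} \<Longrightarrow> ((\<lambda>x. u t x) has_real_derivative ux t x) (at x)"
proof -
  assume C: "C1d T u ut ux" and t: "t \<in> {0..<T}"
  have rng: "(\<lambda>x. (t, x)) ` UNIV \<subseteq> {0..<T} \<times> UNIV" using t by auto
  have f: "((\<lambda>x. (t, x)) has_derivative (\<lambda>h. (0, h))) (at x within UNIV)"
    by (intro has_derivative_Pair derivative_intros)
  have gd: "((\<lambda>p. u (fst p) (snd p)) has_derivative (\<lambda>h. ut t x * fst h + ux t x * snd h))
      (at (t, x) within ({0..<T} \<times> UNIV))" using C1d_at[OF C, of "(t, x)"] t by simp
  have gd2: "((\<lambda>p. u (fst p) (snd p)) has_derivative (\<lambda>h. ut t x * fst h + ux t x * snd h))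
      (at ((\<lambda>x. (t, x)) x) within ((\<lambda>x. (t, x)) ` UNIV))"
    using has_derivative_subset[OF gd rng] by simp
  have "((\<lambda>x. u (fst (t, x)) (snd (t, x))) has_derivative (\<lambda>h. ut t x * fst (0, h) + ux t x * snd (0, h))) (at x within UNIV)"
    using has_derivative_in_compose[OF f gd2] by simp
  moreover have "(\<lambda>h. ut t x * fst (0, h) + ux t x * snd (0, h)) = (*) (ux t x)" by (rule ext) simp
  ultimately show ?thesis unfolding has_field_derivative_def by simp
qed

lemma C1d_path:
  assumes C: "C1d T u ut ux" and yd: "(y has_real_derivative v) (at s within {0..<T})" and s: "s \<in> {0..<T}"
    and ys: "True"
  shows "((\<lambda>s. u s (y s)) has_real_derivative (ut s (y s) + ux s (y s) * v)) (at s within {0..<T})"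
proof -
  have g: "\<And>p. p \<in> {0..<T} \<times> UNIV \<Longrightarrow> ((\<lambda>p. u (fst p) (snd p)) has_derivative
        (\<lambda>h. ut (fst p) (snd p) * fst h + ux (fst p) (snd p) * snd h)) (at p within ({0..<T} \<times> UNIV))"
    using C1d_at[OF C] by blast
  have f: "((\<lambda>s. (s, y s)) has_derivative (\<lambda>h. (h, v * h))) (at s within {0..<T})"
    using yd unfolding has_field_derivative_def by (intro has_derivative_Pair derivative_intros)
  have "((\<lambda>s. u (fst (s, y s)) (snd (s, y s))) has_derivative
      (\<lambda>h. ut (fst (s, y s)) (snd (s, y s)) * fst (h, v * h) + ux (fst (s, y s)) (snd (s, y s)) * snd (h, v * h))) (at s within {0..<T})"
    by (rule has_derivative_in_compose2[OF g _ s f]) auto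
  moreover have "(\<lambda>h. ut (fst (s, y s)) (snd (s, y s)) * fst (h, v * h) + ux (fst (s, y s)) (snd (s, y s)) * snd (h, v * h))
      = (*) (ut s (y s) + ux s (y s) * v)" by (rule ext) (simp add: algebra_simps)
  ultimately show ?thesis unfolding has_field_derivative_def by simp
qed

lemma mvt_T:
  fixes f f' :: "real \<Rightarrow> real"
  assumes ab: "0 \<le> a" "a \<le> b" "b < T"
    and d: "\<And>s. s \<in> {0..<T} \<Longrightarrow> (f has_real_derivative f' s) (at s within {0..<T})"
  shows "\<exists>\<xi>\<in>{a..b}. f b - f a = f' \<xi> * (b - a)"
proof -
  have "\<And>x. a \<le> x \<Longrightarrow> x \<le> b \<Longrightarrow> (f has_derivative (*) (f' x)) (at x within {a..b})"
  proof -
    fix x assume "a \<le> x" "x \<le> b"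
    then have "x \<in> {0..<T}" "{a..b} \<subseteq> {0..<T}" using ab by auto
    then have "(f has_real_derivative f' x) (at x within {a..b})"
      using d has_field_derivative_subset by blast
    then show "(f has_derivative (*) (f' x)) (at x within {a..b})"
      by (simp add: has_field_derivative_def)
  qed
  from mvt_very_simple[OF ab(2) this] show ?thesis by auto
qed

lemma bound_from_transport:
  fixes u ut ux w :: "real \<Rightarrow> real \<Rightarrow> real"
  assumes C: "C1d T u ut ux" and t0: "0 \<le> t0" "t0 < T"
    and pde: "\<And>t x. t \<in> {0..t0} \<Longrightarrow> x \<le> x0 \<Longrightarrow> ut t x = - kf (u t x + w t x) * ux t x"
    and wb: "\<And>t x. t \<in> {0..t0} \<Longrightarrow> x \<le> x0 \<Longrightarrow> cl \<le> w t x \<and> w t x \<le> ch"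
    and cl2: "cl \<le> ch"
    and init: "\<And>x. x \<le> x0 \<Longrightarrow> u 0 x \<le> A"
  shows "u t0 x0 \<le> A"
proof (rule ccontr)
  assume "\<not> u t0 x0 \<le> A"
  then have R: "A < u t0 x0" by simp
  define R0 where "R0 = u t0 x0"
  define \<delta> where "\<delta> = (R0 - A) / (2 * (t0 + 1))"
  have dl: "0 < \<delta>" unfolding \<delta>_def R0_def using R t0 by simp
  have dlt: "\<delta> * t0 < R0 - A"
  proof -
    have "\<delta> * t0 = (R0 - A) * (t0 / (2 * (t0 + 1)))" unfolding \<delta>_def by simp
    also have "\<dots> < (R0 - A) * 1" using R t0 unfolding R0_def
      by (intro mult_strict_left_mono) (auto simp: divide_less_eq)
    finally show ?thesis by simp
  qed
  define I where "I = {R0 - \<delta> * t0 + cl..R0 + ch}"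
  define K where "K = Sup (kf ` I)"
  have bddK: "bdd_above (kf ` I)" unfolding I_def
    by (intro bounded_imp_bdd_above compact_imp_bounded compact_continuous_image compact_Icc
        continuous_at_imp_continuous_on ballI kf_cont)
  have kK: "kf \<eta> \<le> K" if "\<eta> \<in> I" for \<eta> unfolding K_def using bddK that by (intro cSup_upper) auto
  have "0 \<le> \<delta> * t0" using dl t0 by simp
  then have IN: "R0 - \<delta> * t0 + cl \<in> I" unfolding I_def using cl2 by simp
  have K0: "0 \<le> K" using kK[OF IN] kf_ge1[of "R0 - \<delta> * t0 + cl"] by simp
  have "\<exists>x. x0 - K * t0 \<le> x \<and> x \<le> x0 \<and> u t0 x0 - \<delta> * t0 \<le> u 0 x"
  proof (rule transport_lower[where a="\<lambda>t x. kf (u t x + w t x)", OF _ t0 K0 dl])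
    show "\<And>t x. t \<in> {0..<T} \<Longrightarrow> ((\<lambda>p. u (fst p) (snd p)) has_derivative
        (\<lambda>h. ut t x * fst h + ux t x * snd h)) (at (t, x) within ({0..<T} \<times> UNIV))"
      using C unfolding C1d_def by blast
    fix t x assume t: "t \<in> {0..t0}" and x: "x \<le> x0" and lo: "u t0 x0 - \<delta> * t0 \<le> u t x" and hi: "u t x \<le> u t0 x0"
    have "u t x + w t x \<in> I" unfolding I_def R0_def using lo hi wb[OF t x] by auto
    then show "ut t x = - kf (u t x + w t x) * ux t x \<and> 0 \<le> kf (u t x + w t x) \<and> kf (u t x + w t x) \<le> K"
      using pde[OF t x] kK kf_ge1[of "u t x + w t x"] by auto
  qed
  then obtain x where "x \<le> x0" "u t0 x0 - \<delta> * t0 \<le> u 0 x" by blast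
  then show False using init[of x] dlt unfolding R0_def by simp
qed

lemma alg_phi:
  fixes K s k' c p q r' :: real
  assumes s: "s > 0" "s * s = K" and cq: "q * c = - r'"
  shows "(- (k' * (p - q) * c) * s - c * (inverse s / 2 * (k' * (- 2 * K * p)))) / (s * s) = - (k' / s) * r'"
proof -
  have r': "r' = - (q * c)" using cq by simp
  show ?thesis unfolding r' s(2)[symmetric] using s(1) by (simp add: field_simps)
qed

theorem mainTheorem10:
  fixes w0 w1 w2 :: "real \<Rightarrow> real" and rm \<beta> \<epsilon> T :: real
    and r l x2 c2 :: "real \<Rightarrow> real \<Rightarrow> real"
  assumes w0_d1: "\<forall>x. (w0 has_real_derivative w1 x) (at x)"
    and w0_d2: "\<forall>x. (w1 has_real_derivative w2 x) (at x)"
    and w2_cont: "continuous_on UNIV w2"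
    and w1_bdd: "bounded (range w1)"
    and w1_nonconst: "\<exists>x y. w1 x \<noteq> w1 y"
    and lim_bot: "(r0f w1 \<longlongrightarrow> rm) at_bot"
    and eps_pos: "\<epsilon> > 0"
    and sgn1: "sgn (deriv (r0f w1) \<beta> * (r0f w1 \<beta> + rm)) = 1"
    and sgn2: "sgn (deriv (r0f w1) \<beta> * r0f w1 \<beta>) = 1"
    and sep: "\<forall>x\<le>\<beta>. \<bar>r0f w1 \<beta> + r0f w1 x\<bar> > \<epsilon>"
    and T_pos: "T > 0"
    and sol: "solves_D T (r0f w1) r l"
    and char: "backward_char T r l x2 c2"
  shows "let S = Sup ((\<lambda>x. \<bar>r0f w1 \<beta> + r0f w1 x\<bar>) ` {..\<beta>});
             \<gamma> = Inf ((\<lambda>\<eta>. \<bar>ff \<eta>\<bar>) ` {\<epsilon>..S});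
             B = 1 / (sqrt (kf (2 * r0f w1 \<beta>)) * \<bar>deriv (r0f w1) \<beta>\<bar> * \<gamma>)
         in (\<exists>t\<in>{0..<T}. c2 t \<beta> = 0 \<and> t \<le> B) \<or> T \<le> B"
proof -
  define r0 where "r0 = r0f w1"
  have r0e: "r0 x = - Lf (w1 x)" for x unfolding r0_def r0f_def by simp
  have w1c: "continuous_on UNIV w1" by (rule DERIV_continuous_on) (use w0_d2 in auto)
  have Lfc: "continuous_on UNIV Lf" by (intro continuous_at_imp_continuous_on ballI Lf_cont)
  have r0c: "continuous_on UNIV r0"
  proof -
    have "continuous_on UNIV (\<lambda>x. - Lf (w1 x))"
      by (intro continuous_on_minus continuous_on_compose2[OF Lfc w1c]) auto
    moreover have "r0 = (\<lambda>x. - Lf (w1 x))" using r0e by auto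
    ultimately show ?thesis by simp
  qed
  define r0' where "r0' = deriv r0 \<beta>"
  have r0d: "(r0 has_real_derivative r0') (at \<beta>)"
  proof -
    have "((\<lambda>x. - Lf (w1 x)) has_real_derivative - (sqrt (1 + (w1 \<beta>)^2) * w2 \<beta>)) (at \<beta>)"
      using DERIV_minus[OF DERIV_chain2[OF Lf_deriv w0_d2[rule_format]]] .
    moreover have "r0 = (\<lambda>x. - Lf (w1 x))" using r0e by auto
    ultimately show ?thesis unfolding r0'_def using DERIV_imp_deriv by metis
  qed
  have pr: "r0' * r0 \<beta> > 0" using sgn2 unfolding r0'_def r0_def sgn_1_pos .
  then have r0'nz: "r0' \<noteq> 0" and r0bnz: "r0 \<beta> \<noteq> 0" by auto
  obtain M where M: "\<And>x. \<bar>w1 x\<bar> \<le> M" using w1_bdd unfolding bounded_iff by auto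
  have r0b: "\<bar>r0 x\<bar> \<le> Lf M" for x
  proof -
    have "Lf (w1 x) \<le> Lf M" "Lf (- M) \<le> Lf (w1 x)" using M[of x] by (auto simp: Lf_le_iff)
    then show ?thesis unfolding r0e Lf_minus by auto
  qed
  define S where "S = Sup ((\<lambda>x. \<bar>r0 \<beta> + r0 x\<bar>) ` {..\<beta>})"
  have bddS: "bdd_above ((\<lambda>x. \<bar>r0 \<beta> + r0 x\<bar>) ` {..\<beta>})"
  proof (rule bdd_aboveI2)
    fix x show "\<bar>r0 \<beta> + r0 x\<bar> \<le> 2 * Lf M" using r0b[of x] r0b[of \<beta>] by simp
  qed
  have Sge: "\<bar>r0 \<beta> + r0 x\<bar> \<le> S" if "x \<le> \<beta>" for x
    unfolding S_def using bddS that by (intro cSup_upper) auto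
  have sep': "\<epsilon> < \<bar>r0 \<beta> + r0 x\<bar>" if "x \<le> \<beta>" for x using sep that unfolding r0_def by auto
  have epsS: "\<epsilon> < S" using sep'[of \<beta>] Sge[of \<beta>] by simp
  have sgnp: "r0 \<beta> + r0 x > 0" if x: "x \<le> \<beta>" and p: "r0 \<beta> > 0" for x
  proof (rule ccontr)
    assume "\<not> r0 \<beta> + r0 x > 0"
    then have "(\<lambda>y. r0 \<beta> + r0 y) x \<le> 0" "0 \<le> (\<lambda>y. r0 \<beta> + r0 y) \<beta>" using p by auto
    moreover have "continuous_on {x..\<beta>} (\<lambda>y. r0 \<beta> + r0 y)"
      by (intro continuous_intros continuous_on_subset[OF r0c]) auto
    ultimately obtain y where "y \<ge> x" "y \<le> \<beta>" "r0 \<beta> + r0 y = 0"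
      using IVT'[of "\<lambda>y. r0 \<beta> + r0 y" x 0 \<beta>] x by auto
    then show False using sep'[of y] eps_pos by simp
  qed
  have sgnn: "r0 \<beta> + r0 x < 0" if x: "x \<le> \<beta>" and p: "r0 \<beta> < 0" for x
  proof (rule ccontr)
    assume "\<not> r0 \<beta> + r0 x < 0"
    then have "(\<lambda>y. r0 \<beta> + r0 y) \<beta> \<le> 0" "0 \<le> (\<lambda>y. r0 \<beta> + r0 y) x" using p by auto
    moreover have "continuous_on {x..\<beta>} (\<lambda>y. r0 \<beta> + r0 y)"
      by (intro continuous_intros continuous_on_subset[OF r0c]) auto
    ultimately obtain y where "y \<ge> x" "y \<le> \<beta>" "r0 \<beta> + r0 y = 0"
      using IVT2'[of "\<lambda>y. r0 \<beta> + r0 y" \<beta> 0 x] x by auto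
    then show False using sep'[of y] eps_pos by simp
  qed
  define a1 where "a1 = (if r0 \<beta> > 0 then \<epsilon> - r0 \<beta> else - S - r0 \<beta>)"
  define a2 where "a2 = (if r0 \<beta> > 0 then S - r0 \<beta> else - \<epsilon> - r0 \<beta>)"
  have ina: "a1 \<le> r0 x \<and> r0 x \<le> a2" if x: "x \<le> \<beta>" for x
  proof (cases "r0 \<beta> > 0")
    case True
    then show ?thesis using sgnp[OF x True] sep'[OF x] Sge[OF x] unfolding a1_def a2_def by auto
  next
    case False
    then have neg: "r0 \<beta> < 0" using r0bnz by auto
    show ?thesis using sgnn[OF x neg] sep'[OF x] Sge[OF x] False unfolding a1_def a2_def by auto
  qed
  have a12: "a1 \<le> a2" using ina[of \<beta>] by simp
  obtain rt rx lt lx where Cr: "C1_partials T r rt rx" and Cl: "C1_partials T l lt lx"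
    and pde_r: "\<And>t x. t \<in> {0..<T} \<Longrightarrow> rt t x + kf (r t x - l t x) * rx t x = 0"
    and pde_l: "\<And>t x. t \<in> {0..<T} \<Longrightarrow> lt t x - kf (r t x - l t x) * lx t x = 0"
    and r0i: "\<And>x. r 0 x = r0 x" and l0i: "\<And>x. l 0 x = - r0 x"
    using sol unfolding solves_D_def r0_def by blast
  have Cr': "C1d T r rt rx" and Cl': "C1d T l lt lx" using Cr Cl by (auto intro: C1d_of)
  have rxc: "continuous_on ({0..<T} \<times> UNIV) (\<lambda>p. rx (fst p) (snd p))"
    and lxc: "continuous_on ({0..<T} \<times> UNIV) (\<lambda>p. lx (fst p) (snd p))"
    using Cr Cl unfolding C1_partials_def by auto
  have x20: "\<And>b. x2 0 b = b"
    and x2d: "\<And>b t. t \<in> {0..<T} \<Longrightarrow> ((\<lambda>s. x2 s b) has_real_derivative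
          (- kf (r t (x2 t b) - l t (x2 t b)))) (at t within {0..<T})"
    and c2d: "\<And>t b. t \<in> {0..<T} \<Longrightarrow> ((\<lambda>b'. x2 t b') has_real_derivative c2 t b) (at b)"
    using char unfolding backward_char_def by auto
  have x2mono: "x2 t b \<le> x2 s b" if st: "0 \<le> s" "s \<le> t" "t < T" for b s t
  proof -
    obtain \<xi> where "\<xi> \<in> {s..t}" and e: "x2 t b - x2 s b = - kf (r \<xi> (x2 \<xi> b) - l \<xi> (x2 \<xi> b)) * (t - s)"
      using mvt_T[OF st x2d] by blast
    have "0 \<le> kf (r \<xi> (x2 \<xi> b) - l \<xi> (x2 \<xi> b)) * (t - s)"
      using kf_ge1[of "r \<xi> (x2 \<xi> b) - l \<xi> (x2 \<xi> b)"] st by simp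
    then show ?thesis using e by simp
  qed
  have lconst: "l t (x2 t b) = - r0 b" if t: "t \<in> {0..<T}" for t b
  proof -
    have d: "((\<lambda>s. l s (x2 s b)) has_real_derivative 0) (at s within {0..<T})" if s: "s \<in> {0..<T}" for s
    proof (rule DERIV_cong[OF C1d_path[OF Cl' x2d[OF s] s]])
      show "lt s (x2 s b) + lx s (x2 s b) * - kf (r s (x2 s b) - l s (x2 s b)) = 0"
        using pde_l[OF s, of "x2 s b"] by (simp add: algebra_simps)
    qed simp
    obtain \<xi> where "l t (x2 t b) - l 0 (x2 0 b) = 0 * (t - 0)"
      using mvt_T[of 0 t T "\<lambda>s. l s (x2 s b)" "\<lambda>s. 0"] t d by auto
    then show ?thesis using l0i x20 by simp
  qed
  have ident: "lx t (x2 t \<beta>) * c2 t \<beta> = - r0'" if t: "t \<in> {0..<T}" for t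
  proof -
    have d1: "((\<lambda>b. l t (x2 t b)) has_real_derivative lx t (x2 t \<beta>) * c2 t \<beta>) (at \<beta>)"
      using DERIV_chain2[OF C1d_x[OF Cl' t] c2d[OF t]] .
    have eqf: "(\<lambda>b. l t (x2 t b)) = (\<lambda>b. - r0 b)" using lconst[OF t] by auto
    show ?thesis using DERIV_unique[OF d1[unfolded eqf] DERIV_minus[OF r0d]] .
  qed
  have lbound: "a1 \<le> - l t x \<and> - l t x \<le> a2" if t: "t \<in> {0..<T}" and x: "x \<le> x2 t \<beta>" for t x
  proof -
    have "x2 t \<beta> \<le> x2 0 \<beta>" using x2mono[of 0 t] t by auto
    then have xb: "x \<le> \<beta>" using x x20 by simp
    have "x2 t x \<le> x2 0 x" using x2mono[of 0 t] t by auto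
    then have "x2 t x \<le> x" using x20 by simp
    moreover have "continuous_on {x..\<beta>} (\<lambda>b. x2 t b)"
      by (rule DERIV_continuous_on[OF has_field_derivative_at_within[OF c2d[OF t]]])
    ultimately obtain b where b: "b \<ge> x" "b \<le> \<beta>" "x2 t b = x"
      using IVT'[of "\<lambda>b. x2 t b" x x \<beta>] x xb by auto
    have "- l t x = r0 b" using lconst[OF t, of b] b by simp
    then show ?thesis using ina[OF b(2)] by simp
  qed
  have rbound: "a1 \<le> r t0 (x2 t0 \<beta>) \<and> r t0 (x2 t0 \<beta>) \<le> a2" if t0: "t0 \<in> {0..<T}" for t0
  proof -
    have t0': "0 \<le> t0" "t0 < T" using t0 by auto
    have reg: "x \<le> x2 t \<beta> \<and> t \<in> {0..<T}" if "t \<in> {0..t0}" "x \<le> x2 t0 \<beta>" for t x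
      using x2mono[of t t0 \<beta>] that t0 by auto
    have xb: "x2 t0 \<beta> \<le> \<beta>" using x2mono[of 0 t0 \<beta>] t0 x20 by auto
    have up: "r t0 (x2 t0 \<beta>) \<le> a2"
    proof (rule bound_from_transport[OF Cr' t0', where w="\<lambda>t x. - l t x" and cl=a1 and ch=a2])
      fix t x assume tx: "t \<in> {0..t0}" "x \<le> x2 t0 \<beta>"
      show "rt t x = - kf (r t x + - l t x) * rx t x" using pde_r[of t x] reg[OF tx] by (simp add: algebra_simps)
      show "a1 \<le> - l t x \<and> - l t x \<le> a2" using lbound reg[OF tx] by blast
    next
      fix x assume "x \<le> x2 t0 \<beta>"
      then show "r 0 x \<le> a2" using ina[of x] xb r0i by simp
    qed (use a12 in simp)
    have lo: "- r t0 (x2 t0 \<beta>) \<le> - a1"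
    proof (rule bound_from_transport[OF C1d_neg[OF Cr'] t0', where w="\<lambda>t x. l t x" and cl="- a2" and ch="- a1"])
      fix t x assume tx: "t \<in> {0..t0}" "x \<le> x2 t0 \<beta>"
      have "kf (- r t x + l t x) = kf (r t x - l t x)" using kf_minus[of "r t x - l t x"] by simp
      then show "- rt t x = - kf (- r t x + l t x) * - rx t x" using pde_r[of t x] reg[OF tx] by (simp add: algebra_simps)
      show "- a2 \<le> l t x \<and> l t x \<le> - a1" using lbound reg[OF tx] by force
    next
      fix x assume "x \<le> x2 t0 \<beta>"
      then show "- r 0 x \<le> - a1" using ina[of x] xb r0i by simp
    qed (use a12 in simp)
    show ?thesis using up lo by simp
  qed
  define gm where "gm = Inf ((\<lambda>\<eta>. \<bar>ff \<eta>\<bar>) ` {\<epsilon>..S})"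
  have ffac: "continuous_on {\<epsilon>..S} (\<lambda>\<eta>. \<bar>ff \<eta>\<bar>)"
    by (intro continuous_at_imp_continuous_on ballI continuous_intros ff_cont)
  have gmbdd: "bdd_below ((\<lambda>\<eta>. \<bar>ff \<eta>\<bar>) ` {\<epsilon>..S})" by (rule bdd_belowI2[where m=0]) simp
  have gmle: "gm \<le> \<bar>ff \<eta>\<bar>" if "\<eta> \<in> {\<epsilon>..S}" for \<eta>
    unfolding gm_def using gmbdd that by (intro cInf_lower) auto
  have ffpos: "ff \<eta> > 0" if "\<eta> > 0" for \<eta>
    unfolding ff_eq using kd_pos[OF that] kf_ge1[of \<eta>] by simp
  have ffneg: "ff \<eta> < 0" if "\<eta> < 0" for \<eta>
  proof -
    have "kd \<eta> < 0" using kd_pos[of "- \<eta>"] that kd_minus[of \<eta>] by simp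
    then show ?thesis unfolding ff_eq using kf_ge1[of \<eta>] by (simp add: divide_neg_pos)
  qed
  have ffm: "\<bar>ff (- \<eta>)\<bar> = \<bar>ff \<eta>\<bar>" for \<eta> unfolding ff_eq kd_minus kf_minus by simp
  have gmpos: "gm > 0"
  proof -
    have "gm \<in> (\<lambda>\<eta>. \<bar>ff \<eta>\<bar>) ` {\<epsilon>..S}" unfolding gm_def
      by (rule closed_contains_Inf) (use epsS gmbdd in \<open>auto intro!: compact_imp_closed compact_continuous_image ffac\<close>)
    then obtain \<eta> where "\<eta> \<in> {\<epsilon>..S}" "gm = \<bar>ff \<eta>\<bar>" by blast
    then show ?thesis using ffpos[of \<eta>] eps_pos by auto
  qed
  define Bv where "Bv = 1 / (sqrt (kf (2 * r0 \<beta>)) * \<bar>r0'\<bar> * gm)"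
  have sqk: "sqrt (kf x) > 0" for x using kf_ge1[of x] by simp
  have Bpos: "Bv > 0" unfolding Bv_def using sqk[of "2 * r0 \<beta>"] r0'nz gmpos by simp
  have final: "(\<exists>t\<in>{0..<T}. c2 t \<beta> = 0 \<and> t \<le> Bv) \<or> T \<le> Bv"
  proof (cases "T \<le> Bv")
    case True then show ?thesis by simp
  next
    case False
    then have BT: "Bv < T" by simp
    have sub: "{0..Bv} \<subseteq> {0..<T}" using BT by auto
    define F where "F t x = kf (r t x - l t x)" for t x
    define Fx where "Fx t x = kd (r t x - l t x) * (rx t x - lx t x)" for t x
    have Xd: "((\<lambda>s. x2 s b) has_real_derivative (- F t (x2 t b))) (at t within {0..Bv})"
      if t: "t \<in> {0..Bv}" for b t
    proof -
      have "t \<in> {0..<T}" using t sub by auto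
      then show ?thesis unfolding F_def using x2d has_field_derivative_subset[OF _ sub] by blast
    qed
    have Fd: "((\<lambda>x. F t x) has_real_derivative Fx t x) (at x)" if t: "t \<in> {0..Bv}" for t x
    proof -
      have tT: "t \<in> {0..<T}" using t sub by auto
      show ?thesis unfolding F_def Fx_def
        using DERIV_chain2[OF kf_deriv DERIV_diff[OF C1d_x[OF Cr' tT] C1d_x[OF Cl' tT]]] .
    qed
    have kdc: "continuous_on UNIV kd" by (intro continuous_at_imp_continuous_on ballI kd_cont)
    have rc: "continuous_on ({0..<T} \<times> UNIV) (\<lambda>p. r (fst p) (snd p))" by (rule C1d_cont[OF Cr'])
    have lc: "continuous_on ({0..<T} \<times> UNIV) (\<lambda>p. l (fst p) (snd p))" by (rule C1d_cont[OF Cl'])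
    have FxcT: "continuous_on ({0..<T} \<times> UNIV) (\<lambda>p. Fx (fst p) (snd p))"
    proof -
      have "continuous_on ({0..<T} \<times> UNIV) (\<lambda>p. kd (r (fst p) (snd p) - l (fst p) (snd p)))"
        by (rule continuous_on_compose2[OF kdc continuous_on_diff[OF rc lc]]) auto
      then show ?thesis unfolding Fx_def by (intro continuous_on_mult continuous_on_diff rxc lxc)
    qed
    have Fxc: "continuous_on ({0..Bv} \<times> UNIV) (\<lambda>p. Fx (fst p) (snd p))"
      by (rule continuous_on_subset[OF FxcT]) (use sub in auto)
    have Cd: "((\<lambda>b. x2 t b) has_real_derivative c2 t \<beta>) (at \<beta>)" if "t \<in> {0..Bv}" for t
      using c2d sub that by blast
    have var: "c2 t \<beta> = 1 - integral {0..t} (\<lambda>s. Fx s (x2 s \<beta>) * c2 s \<beta>)" if "t \<in> {0..Bv}" for t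
      using variational[OF Bpos Xd x20 Fd Fxc Cd that] .
    have gc: "continuous_on {0..Bv} (\<lambda>s. x2 s \<beta>)" by (rule DERIV_continuous_on[OF Xd])
    have pc: "continuous_on {0..Bv} (\<lambda>s. (s, x2 s \<beta>))" by (intro continuous_on_Pair continuous_on_id gc)
    have pim: "(\<lambda>s. (s, x2 s \<beta>)) ` {0..Bv} \<subseteq> {0..<T} \<times> UNIV" using sub by auto
    have lxg: "continuous_on {0..Bv} (\<lambda>s. lx s (x2 s \<beta>))" using continuous_on_compose2[OF lxc pc pim] by simp
    have Fxg: "continuous_on {0..Bv} (\<lambda>s. Fx s (x2 s \<beta>))" using continuous_on_compose2[OF FxcT pc pim] by simp
    have identB: "lx s (x2 s \<beta>) * c2 s \<beta> = - r0'" if "s \<in> {0..Bv}" for s using ident sub that by blast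
    have lxnz: "lx s (x2 s \<beta>) \<noteq> 0" if "s \<in> {0..Bv}" for s using identB[OF that] r0'nz by force
    have c2eq: "- r0' / lx s (x2 s \<beta>) = c2 s \<beta>" if "s \<in> {0..Bv}" for s
    proof -
      have "- r0' / lx s (x2 s \<beta>) = (lx s (x2 s \<beta>) * c2 s \<beta>) / lx s (x2 s \<beta>)" using identB[OF that] by simp
      also have "\<dots> = c2 s \<beta>" using lxnz[OF that] by simp
      finally show ?thesis .
    qed
    have c2c: "continuous_on {0..Bv} (\<lambda>s. c2 s \<beta>)"
    proof (rule continuous_on_eq[OF _ c2eq])
      show "continuous_on {0..Bv} (\<lambda>s. - r0' / lx s (x2 s \<beta>))"
        by (intro continuous_on_divide continuous_on_const lxg) (use lxnz in auto)
    qed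
    have Gc: "continuous_on {0..Bv} (\<lambda>s. Fx s (x2 s \<beta>) * c2 s \<beta>)" by (intro continuous_on_mult Fxg c2c)
    have c2dt: "((\<lambda>s. c2 s \<beta>) has_real_derivative - (Fx t (x2 t \<beta>) * c2 t \<beta>)) (at t within {0..Bv})"
      if t: "t \<in> {0..Bv}" for t
    proof -
      have "((\<lambda>x. 1 - integral {0..x} (\<lambda>s. Fx s (x2 s \<beta>) * c2 s \<beta>)) has_real_derivative
          0 - Fx t (x2 t \<beta>) * c2 t \<beta>) (at t within {0..Bv})"
        by (intro DERIV_diff DERIV_const integral_has_real_derivative Gc t)
      then have "((\<lambda>s. c2 s \<beta>) has_real_derivative 0 - Fx t (x2 t \<beta>) * c2 t \<beta>) (at t within {0..Bv})"
        by (rule has_field_derivative_transform_within[where d=1]) (use t var in auto)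
      then show ?thesis by simp
    qed
    define eta where "eta s = r s (x2 s \<beta>) - l s (x2 s \<beta>)" for s
    have etal: "eta s = r s (x2 s \<beta>) + r0 \<beta>" if "s \<in> {0..<T}" for s
      unfolding eta_def using lconst[OF that] by simp
    have etad: "(eta has_real_derivative (- 2 * kf (eta s) * rx s (x2 s \<beta>))) (at s within {0..Bv})"
      if s: "s \<in> {0..Bv}" for s
    proof -
      have sT: "s \<in> {0..<T}" using s sub by auto
      have d1: "((\<lambda>s. r s (x2 s \<beta>)) has_real_derivative rt s (x2 s \<beta>) + rx s (x2 s \<beta>) * - kf (r s (x2 s \<beta>) - l s (x2 s \<beta>))) (at s within {0..<T})"
        by (rule C1d_path[OF Cr' x2d[OF sT] sT]) simp
      have d2: "((\<lambda>s. l s (x2 s \<beta>)) has_real_derivative lt s (x2 s \<beta>) + lx s (x2 s \<beta>) * - kf (r s (x2 s \<beta>) - l s (x2 s \<beta>))) (at s within {0..<T})"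
        by (rule C1d_path[OF Cl' x2d[OF sT] sT]) simp
      have "(eta has_real_derivative (- 2 * kf (eta s) * rx s (x2 s \<beta>))) (at s within {0..<T})"
        unfolding eta_def
      proof (rule DERIV_cong[OF DERIV_diff[OF d1 d2]])
        show "rt s (x2 s \<beta>) + rx s (x2 s \<beta>) * - kf (r s (x2 s \<beta>) - l s (x2 s \<beta>)) -
            (lt s (x2 s \<beta>) + lx s (x2 s \<beta>) * - kf (r s (x2 s \<beta>) - l s (x2 s \<beta>))) =
            - 2 * kf (r s (x2 s \<beta>) - l s (x2 s \<beta>)) * rx s (x2 s \<beta>)"
          using pde_r[OF sT, of "x2 s \<beta>"] pde_l[OF sT, of "x2 s \<beta>"] by (simp add: algebra_simps)
      qed
      then show ?thesis using has_field_derivative_subset[OF _ sub] by blast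
    qed
    define Phi where "Phi s = c2 s \<beta> / sqrt (kf (eta s))" for s
    have Phid: "(Phi has_real_derivative (- ff (eta s) * r0')) (at s within {0..Bv})" if s: "s \<in> {0..Bv}" for s
    proof -
      have dK: "((\<lambda>s. kf (eta s)) has_real_derivative kd (eta s) * (- 2 * kf (eta s) * rx s (x2 s \<beta>))) (at s within {0..Bv})"
        using DERIV_chain2[OF kf_deriv etad[OF s]] .
      have Kp: "0 < kf (eta s)" using kf_ge1[of "eta s"] by simp
      have dsq: "((\<lambda>s. sqrt (kf (eta s))) has_real_derivative
          inverse (sqrt (kf (eta s))) / 2 * (kd (eta s) * (- 2 * kf (eta s) * rx s (x2 s \<beta>)))) (at s within {0..Bv})"
        using DERIV_chain2[OF DERIV_real_sqrt[OF Kp] dK] .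
      have nz: "sqrt (kf (eta s)) \<noteq> 0" using sqk[of "eta s"] by simp
      note dP = DERIV_divide[OF c2dt[OF s] dsq nz]
      have Fxe: "Fx s (x2 s \<beta>) = kd (eta s) * (rx s (x2 s \<beta>) - lx s (x2 s \<beta>))" unfolding Fx_def eta_def ..
      have "(- (Fx s (x2 s \<beta>) * c2 s \<beta>) * sqrt (kf (eta s)) -
            c2 s \<beta> * (inverse (sqrt (kf (eta s))) / 2 * (kd (eta s) * (- 2 * kf (eta s) * rx s (x2 s \<beta>))))) /
           (sqrt (kf (eta s)) * sqrt (kf (eta s))) = - (kd (eta s) / sqrt (kf (eta s))) * r0'"
        unfolding Fxe
      proof (rule alg_phi)
        show "0 < sqrt (kf (eta s))" by (rule sqk)
        show "sqrt (kf (eta s)) * sqrt (kf (eta s)) = kf (eta s)" using Kp by simp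
        show "lx s (x2 s \<beta>) * c2 s \<beta> = - r0'" by (rule identB[OF s])
      qed
      then show ?thesis using dP unfolding Phi_def ff_eq by simp
    qed
    have Phib: "- ff (eta s) * r0' \<le> - (\<bar>r0'\<bar> * gm)" if s: "s \<in> {0..Bv}" for s
    proof -
      have sT: "s \<in> {0..<T}" using s sub by auto
      have rb: "a1 \<le> r s (x2 s \<beta>)" "r s (x2 s \<beta>) \<le> a2" using rbound[OF sT] by auto
      have ee: "eta s = r s (x2 s \<beta>) + r0 \<beta>" by (rule etal[OF sT])
      have "\<bar>r0'\<bar> * gm \<le> ff (eta s) * r0'"
      proof (cases "r0 \<beta> > 0")
        case True
        have ein: "eta s \<in> {\<epsilon>..S}" using rb True unfolding ee a1_def a2_def by auto
        have rp: "r0' > 0" using pr True by (simp add: zero_less_mult_iff)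
        have fp: "ff (eta s) > 0" using ffpos ein eps_pos by simp
        have "gm \<le> ff (eta s)" using gmle[OF ein] fp by simp
        then show ?thesis using rp by (simp add: mult_right_mono mult.commute)
      next
        case False
        then have neg: "r0 \<beta> < 0" using r0bnz by simp
        have ein: "- eta s \<in> {\<epsilon>..S}" using rb neg unfolding ee a1_def a2_def by auto
        have rn: "r0' < 0" using pr neg by (simp add: zero_less_mult_iff)
        have fn: "ff (eta s) < 0" using ffneg ein eps_pos by simp
        have "gm \<le> - ff (eta s)" using gmle[OF ein] fn ffm[of "eta s"] by simp
        then have "gm * (- r0') \<le> - ff (eta s) * (- r0')" using rn by (intro mult_right_mono) auto
        then show ?thesis using rn by (simp add: mult.commute)
      qed
      then show ?thesis by simp
    qed
    obtain \<xi> where xi: "\<xi> \<in> {0..Bv}" "Phi Bv - Phi 0 = (- ff (eta \<xi>) * r0') * (Bv - 0)"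
    proof -
      have "\<And>x. 0 \<le> x \<Longrightarrow> x \<le> Bv \<Longrightarrow> (Phi has_derivative (*) (- ff (eta x) * r0')) (at x within {0..Bv})"
        using Phid unfolding has_field_derivative_def by auto
      from mvt_very_simple[OF less_imp_le[OF Bpos] this] show ?thesis using that by auto
    qed
    have c20: "c2 0 \<beta> = 1"
    proof -
      have "0 \<in> {0..<T}" using T_pos by simp
      from c2d[OF this, of \<beta>] have "((\<lambda>b. b) has_real_derivative c2 0 \<beta>) (at \<beta>)" using x20 by simp
      then show ?thesis using DERIV_unique[OF _ DERIV_ident] by blast
    qed
    have eta0: "eta 0 = 2 * r0 \<beta>" unfolding eta_def using x20 r0i l0i by simp
    have Phi0: "Phi 0 = 1 / sqrt (kf (2 * r0 \<beta>))" unfolding Phi_def c20 eta0 ..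
    have "Phi Bv \<le> Phi 0 - \<bar>r0'\<bar> * gm * Bv"
    proof -
      have "(- ff (eta \<xi>) * r0') * Bv \<le> - (\<bar>r0'\<bar> * gm) * Bv"
        using Phib[OF xi(1)] Bpos by (intro mult_right_mono) auto
      then show ?thesis using xi(2) by simp
    qed
    also have "\<bar>r0'\<bar> * gm * Bv = 1 / sqrt (kf (2 * r0 \<beta>))"
      unfolding Bv_def using sqk[of "2 * r0 \<beta>"] r0'nz gmpos by (simp add: field_simps)
    finally have PB: "Phi Bv \<le> 0" unfolding Phi0 by simp
    have P0: "0 \<le> Phi 0" unfolding Phi0 using sqk[of "2 * r0 \<beta>"] by simp
    have Pc: "continuous_on {0..Bv} Phi" by (rule DERIV_continuous_on[OF Phid])
    obtain t where t: "0 \<le> t" "t \<le> Bv" "Phi t = 0"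
      using IVT2'[of Phi Bv 0 0, OF PB P0 less_imp_le[OF Bpos] Pc] by auto
    have "c2 t \<beta> = 0" using t(3) sqk[of "eta t"] unfolding Phi_def by simp
    then show ?thesis using t BT by auto
  qed
  show ?thesis unfolding Let_def using final unfolding Bv_def gm_def S_def r0'_def r0_def .
qed

end
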